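(* Let $n\ge1$, $\bar M_0=\{u\in\mathbb{C}^{n+2}\mid u_1\cdots u_{n+2}=1,\ u_1+\cdots+u_{n+2}=0\}$, $\varpi:\bar M_0\to\mathbb{C}^\times$, $\varpi(u)=u_1$, and $p:\bar M_0\to\mathcal{P}^n$, $p(u)=[u_1:\cdots:u_{n+2}]$, where $\mathcal{P}^n=\{[z_1:\cdots:z_{n+2}]\in\mathbb{P}^{n+1}_{\mathbb{C}}\mid z_1+\cdots+z_{n+2}=0,\ z_i\ne0\}$. Let $U_1=\{[z_1:z_2:\cdots:z_{n+1}:1]\in\mathcal{P}^n\mid z_2,\ldots,z_{n+1}\in\mathbb{R}_{>0}\}$. Then $p^{-1}(U_1)$ consists of exactly $n+2$ connected components $U_\zeta$, indexed by the solutions $\zeta$ of $\zeta^{n+2}=(-1)^{n+1}(n+1)^{n+1}$, where $U_\zeta$ is characterized by the condition $\zeta\in\varpi(U_\zeta)$. *)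

theory Defs
  imports "HOL-Analysis.Analysis"
begin

text \<open>Points of C^(n+2) are modelled as functions nat => complex, indexed by 1..n+2
  and zero outside; the topology is the product topology (equal to the Euclidean one
  on this finite-dimensional slice).\<close>

definition Mbar0 :: "nat \<Rightarrow> (nat \<Rightarrow> complex) set" where
  "Mbar0 n = {u. (\<forall>i. i \<notin> {1..n+2} \<longrightarrow> u i = 0)
                 \<and> (\<Prod>i=1..n+2. u i) = 1 \<and> (\<Sum>i=1..n+2. u i) = 0}"

definition varpi :: "(nat \<Rightarrow> complex) \<Rightarrow> complex" where
  "varpi u = u 1"

definition preU1 :: "nat \<Rightarrow> (nat \<Rightarrow> complex) set" where
  "preU1 n = {u \<in> Mbar0 n. \<exists>c z. c \<noteq> 0 \<and> z (n+2) = 1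
       \<and> (\<forall>i\<in>{1..n+2}. z i \<noteq> 0) \<and> (\<Sum>i=1..n+2. z i) = 0
       \<and> (\<forall>i\<in>{2..n+1}. z i \<in> \<real> \<and> Re (z i) > 0)
       \<and> (\<forall>i\<in>{1..n+2}. u i = c * z i)}"

end

theory Submission
  imports Defs
begin

lemma split_set: "{1..(n::nat)+2} = insert 1 (insert (n+2) {2..n+1})" by auto

lemma split_sum: "(\<Sum>i=1..(n::nat)+2. f i) = f 1 + (\<Sum>i=2..n+1. f i) + (f (n+2) :: 'a::comm_monoid_add)"
  unfolding split_set by (simp add: sum.insert add_ac)

lemma split_prod: "(\<Prod>i=1..(n::nat)+2. f i) = f 1 * (\<Prod>i=2..n+1. f i) * (f (n+2) :: 'a::comm_monoid_mult)"
  unfolding split_set by (simp add: prod.insert mult_ac)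

lemma aux2: fixes c :: complex shows "c = - (w * a / s) \<Longrightarrow> c ^ (n+1) = (-1)^(n+1) * (w * a)^(n+1) / s ^ (n+1)"
proof -
  assume "c = - (w * a / s)"
  then have eq: "c = (- (w*a)) / s" by simp
  show ?thesis unfolding eq power_divide power_minus[of "w*a"] by (rule refl)
qed
lemma aux1: "(x::complex)*y*((-1)^k * (x*y)^k / z) * p = (-1)^k * x^(Suc k) * (y^(Suc k) * p / z)"
  by (simp add: power_mult_distrib mult_ac)

definition sS :: "nat \<Rightarrow> (nat \<Rightarrow> real) \<Rightarrow> real" where "sS n t = 1 + (\<Sum>i=2..n+1. t i)"
definition PP :: "nat \<Rightarrow> (nat \<Rightarrow> real) \<Rightarrow> real" where "PP n t = (\<Prod>i=2..n+1. t i)"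
definition AA :: "nat \<Rightarrow> (nat \<Rightarrow> real) \<Rightarrow> real" where "AA n t = root (n+2) (sS n t ^ (n+1) / PP n t)"
definition pos :: "nat \<Rightarrow> (nat \<Rightarrow> real) \<Rightarrow> bool" where "pos n t = (\<forall>i\<in>{2..n+1}. t i > 0)"
definition GG :: "nat \<Rightarrow> complex \<Rightarrow> (nat \<Rightarrow> real) \<Rightarrow> nat \<Rightarrow> complex" where
  "GG n w t = (\<lambda>i. if i = 1 then w * of_real (AA n t)
      else if i \<in> {2..n+2} then - (w * of_real (AA n t) / of_real (sS n t)) * of_real (if i = n+2 then 1 else t i)
      else 0)"
definition ph :: "(nat \<Rightarrow> complex) \<Rightarrow> complex" where "ph u = u 1 / of_real (cmod (u 1))"
definition CC :: "nat \<Rightarrow> complex \<Rightarrow> (nat \<Rightarrow> complex) set" where "CC n w = {u \<in> preU1 n. ph u = w}"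
definition WW :: "nat \<Rightarrow> complex set" where "WW n = {w. w ^ (n+2) = (-1) ^ (n+1)}"

lemma pos_facts:
  assumes "pos n t"
  shows "sS n t > 0" "PP n t > 0" "AA n t > 0" "AA n t ^ (n+2) = sS n t ^ (n+1) / PP n t"
proof -
  have "\<forall>i\<in>{2..n+1}. 0 \<le> t i" using assms unfolding pos_def by (auto simp: le_less)
  then have "(\<Sum>i=2..n+1. t i) \<ge> 0" by (intro sum_nonneg) blast
  then show s: "sS n t > 0" unfolding sS_def by simp
  show p: "PP n t > 0" using assms unfolding pos_def PP_def by (intro prod_pos) auto
  show "AA n t > 0" unfolding AA_def using s p by simp
  show "AA n t ^ (n+2) = sS n t ^ (n+1) / PP n t" unfolding AA_def using s p
    by (intro real_root_pow_pos) auto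
qed

lemma WW_norm: "w \<in> WW n \<Longrightarrow> cmod w = 1"
proof -
  assume "w \<in> WW n"
  then have "cmod (w ^ (n+2)) = cmod ((-1::complex) ^ (n+1))" unfolding WW_def by simp
  then have "cmod w ^ (n+2) = 1" by (simp only: norm_power norm_minus_cancel norm_one power_one)
  then have "root (n+2) 1 = cmod w" by (intro real_root_pos_unique) auto
  then show ?thesis by simp
qed

lemma sum_GG:
  assumes "pos n t"
  shows "(\<Sum>i=1..n+2. GG n w t i) = 0"
proof -
  define c where "c = - (w * of_real (AA n t) / of_real (sS n t))"
  have s: "sS n t > 0" using pos_facts[OF assms] by simp
  have "(\<Sum>i=2..n+1. GG n w t i) = (\<Sum>i=2..n+1. c * of_real (t i))"
    by (rule sum.cong) (auto simp: GG_def c_def)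
  also have "\<dots> = c * of_real (sS n t - 1)" by (simp add: sS_def of_real_sum sum_distrib_left del: sum.cl_ivl_Suc)
  finally have "(\<Sum>i=1..n+2. GG n w t i) = w * of_real (AA n t) + c * of_real (sS n t - 1) + c"
    unfolding split_sum by (simp add: GG_def c_def)
  also have "\<dots> = w * of_real (AA n t) + c * of_real (sS n t)" by (simp add: algebra_simps)
  also have "c * of_real (sS n t) = - (w * of_real (AA n t))" unfolding c_def using s by simp
  also have "w * of_real (AA n t) + - (w * of_real (AA n t)) = 0" by simp
  finally show ?thesis .
qed

lemma prod_GG:
  assumes "pos n t"
  shows "(\<Prod>i=1..n+2. GG n w t i) = (-1) ^ (n+1) * w ^ (n+2)"
proof -
  define c where "c = - (w * of_real (AA n t) / of_real (sS n t))"
  note f = pos_facts[OF assms]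
  have "(\<Prod>i=2..n+1. GG n w t i) = (\<Prod>i=2..n+1. c * of_real (t i))"
    by (rule prod.cong) (auto simp: GG_def c_def)
  also have "\<dots> = c ^ n * of_real (PP n t)" by (simp add: prod.distrib PP_def)
  finally have "(\<Prod>i=1..n+2. GG n w t i) = w * of_real (AA n t) * (c ^ n * of_real (PP n t)) * c"
    unfolding split_prod by (simp add: GG_def c_def)
  also have "\<dots> = w * of_real (AA n t) * c ^ (n+1) * of_real (PP n t)"
    by (simp add: algebra_simps)
  also have "c ^ (n+1) = (-1)^(n+1) * (w * of_real (AA n t))^(n+1) / of_real (sS n t) ^ (n+1)"
    by (rule aux2[OF c_def])
  also have "w * of_real (AA n t) * ((-1)^(n+1) * (w * of_real (AA n t))^(n+1) / of_real (sS n t) ^ (n+1)) * of_real (PP n t)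
     = (-1)^(n+1) * w ^ (n+2) * (of_real (AA n t) ^ (n+2) * of_real (PP n t) / of_real (sS n t) ^ (n+1))"
    using aux1[of w "of_real (AA n t)" "n+1" "of_real (sS n t) ^ (n+1)" "of_real (PP n t)"] by simp
  also have "of_real (AA n t) ^ (n+2) * of_real (PP n t) / of_real (sS n t) ^ (n+1) = (of_real (AA n t ^ (n+2) * PP n t / sS n t ^ (n+1)) :: complex)"
    by simp
  also have "AA n t ^ (n+2) * PP n t / sS n t ^ (n+1) = 1" using f by simp
  finally show ?thesis by simp
qed
lemma GG_outside: "i \<notin> {1..n+2} \<Longrightarrow> GG n w t i = 0"
  by (auto simp: GG_def)

lemma GG_ne0:
  assumes "pos n t" "w \<noteq> 0" "i \<in> {1..n+2}"
  shows "GG n w t i \<noteq> 0"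
proof -
  note f = pos_facts[OF assms(1)]
  have "i \<in> {2..n+1} \<Longrightarrow> t i \<noteq> 0" using assms(1) unfolding pos_def by force
  then show ?thesis using assms f by (auto simp: GG_def)
qed

lemma GG_mem:
  assumes "pos n t" "w \<in> WW n"
  shows "GG n w t \<in> preU1 n"
proof -
  have w0: "w \<noteq> 0" using WW_norm[OF assms(2)] by auto
  have M: "GG n w t \<in> Mbar0 n"
    unfolding Mbar0_def using prod_GG[OF assms(1), of w] sum_GG[OF assms(1), of w] assms(2)
    by (auto simp: GG_outside WW_def)
  define c where "c = GG n w t (n+2)"
  define z where "z = (\<lambda>i. GG n w t i / c)"
  have c0: "c \<noteq> 0" unfolding c_def using GG_ne0[OF assms(1) w0] by simp
  have h1: "z (n+2) = 1" using c0 by (simp add: z_def c_def)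
  have h2: "\<forall>i\<in>{1..n+2}. z i \<noteq> 0" using c0 GG_ne0[OF assms(1) w0] by (simp add: z_def)
  have h3: "(\<Sum>i=1..n+2. z i) = 0" unfolding z_def sum_divide_distrib[symmetric]
    using sum_GG[OF assms(1)] by simp
  have zt: "\<forall>i\<in>{2..n+1}. z i = of_real (t i)"
  proof
    fix i assume i: "i \<in> {2..n+1}"
    then have "GG n w t i = c * of_real (t i)" by (auto simp: GG_def c_def)
    then show "z i = of_real (t i)" using c0 by (simp add: z_def)
  qed
  have h4: "\<forall>i\<in>{2..n+1}. z i \<in> \<real> \<and> Re (z i) > 0" using zt assms(1) unfolding pos_def by auto
  have h5: "\<forall>i\<in>{1..n+2}. GG n w t i = c * z i" using c0 by (simp add: z_def)
  have "\<exists>c z. c \<noteq> 0 \<and> z (n+2) = 1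
       \<and> (\<forall>i\<in>{1..n+2}. z i \<noteq> 0) \<and> (\<Sum>i=1..n+2. z i) = 0
       \<and> (\<forall>i\<in>{2..n+1}. z i \<in> \<real> \<and> Re (z i) > 0)
       \<and> (\<forall>i\<in>{1..n+2}. GG n w t i = c * z i)"
    by (rule exI[of _ c], rule exI[of _ z]) (intro conjI c0 h1 h2 h3 h4 h5)
  then show ?thesis unfolding preU1_def using M by blast
qed

lemma ph_GG:
  assumes "pos n t" "cmod w = 1"
  shows "ph (GG n w t) = w"
proof -
  have a: "AA n t > 0" using pos_facts[OF assms(1)] by simp
  have "cmod (GG n w t 1) = AA n t" using assms a by (simp add: GG_def norm_mult)
  then show ?thesis using a by (simp add: ph_def GG_def)
qed

lemma aux4:
  fixes s p :: real
  assumes "s \<noteq> 0" "p \<noteq> 0"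
  shows "(-1)^(k+1) * (- 1 / (of_real (s*p) :: complex)) * of_real s^(k+1) = (-1)^k * of_real (s^k / p)"
proof -
  have "(-1)^(k+1) * (- 1 / (of_real (s*p) :: complex)) = (-1)^k / (of_real s * of_real p)" by simp
  moreover have "(of_real s :: complex)^(k+1) = of_real s * of_real s ^ k" by simp
  ultimately show ?thesis using assms by simp
qed

lemma aux3:
  fixes c :: complex and s p :: real
  assumes "s \<noteq> 0" "p \<noteq> 0" "c^(k+1) * (- of_real (s*p)) = 1"
  shows "(-c * of_real s)^(k+1) = (-1)^k * of_real (s^k / p)"
proof -
  have d: "of_real (s*p) \<noteq> (0::complex)" using assms by simp
  have gen: "x = -1 / y" if h: "x * (- y) = 1" "y \<noteq> 0" for x y :: complex
  proof -
    have "-(x*y) = 1" using h(1) by simp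
    then have "-1 = x*y" using minus_equation_iff[of "x*y" 1] by blast
    then show ?thesis using h(2) by (simp add: nonzero_eq_divide_eq)
  qed
  have c: "c^(k+1) = - 1 / of_real (s*p)" using gen[OF assms(3) d] .
  have "(-c * of_real s)^(k+1) = (-1)^(k+1) * c^(k+1) * of_real s ^(k+1)"
    by (simp only: power_mult_distrib power_minus[of c])
  also have "\<dots> = (-1)^k * of_real (s^k / p)" unfolding c using aux4[OF assms(1,2)] .
  finally show ?thesis .
qed

lemma decomp:
  assumes u: "u \<in> preU1 n"
  defines "tt \<equiv> (\<lambda>i. Re (u i / u (n+2)))"
  shows "pos n tt" "u 1 \<noteq> 0" "ph u \<in> WW n" "u = GG n (ph u) tt"
proof -
  obtain c z where c0: "c \<noteq> 0" and zn: "z (n+2) = 1" and znz: "\<forall>i\<in>{1..n+2}. z i \<noteq> 0"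
    and zs: "(\<Sum>i=1..n+2. z i) = 0" and zr: "\<forall>i\<in>{2..n+1}. z i \<in> \<real> \<and> Re (z i) > 0"
    and uc: "\<forall>i\<in>{1..n+2}. u i = c * z i"
    using u unfolding preU1_def by blast
  have uM: "u \<in> Mbar0 n" using u unfolding preU1_def by blast
  have un: "u (n+2) = c" using uc zn by simp
  have tz: "\<forall>i\<in>{2..n+1}. z i = of_real (tt i)"
  proof
    fix i assume i: "i \<in> {2..n+1}"
    then have "u i / u (n+2) = z i" using uc c0 un by simp
    then have "tt i = Re (z i)" by (simp add: tt_def)
    then show "z i = of_real (tt i)" using zr i by (simp add: of_real_Re)
  qed
  show pos: "pos n tt" unfolding pos_def
  proof
    fix i assume i: "i \<in> {2..n+1}"
    then have "u i / u (n+2) = z i" using uc c0 un by simp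
    then show "tt i > 0" using zr i by (simp add: tt_def)
  qed
  note f = pos_facts[OF pos]
  define S where "S = sS n tt"
  define P where "P = PP n tt"
  have S0: "S > 0" and P0: "P > 0" using f by (simp_all add: S_def P_def)
  have "(\<Sum>i=2..n+1. z i) = (\<Sum>i=2..n+1. of_real (tt i))" using tz by (intro sum.cong) auto
  also have "\<dots> = of_real (S - 1)" by (simp add: S_def sS_def of_real_sum del: sum.cl_ivl_Suc)
  finally have z1: "z 1 = - of_real S" using zs zn unfolding split_sum
    by (simp add: algebra_simps add_eq_0_iff)
  have "(\<Prod>i=2..n+1. z i) = (\<Prod>i=2..n+1. of_real (tt i))" using tz by (intro prod.cong) auto
  also have "\<dots> = of_real P" by (simp add: P_def PP_def of_real_prod del: prod.cl_ivl_Suc)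
  finally have pz: "(\<Prod>i=1..n+2. z i) = - of_real (S * P)" unfolding split_prod using z1 zn by simp
  have "1 = (\<Prod>i=1..n+2. u i)" using uM unfolding Mbar0_def by simp
  also have "\<dots> = (\<Prod>i=1..n+2. c * z i)" using uc by (intro prod.cong) auto
  also have "\<dots> = c^(n+2) * (\<Prod>i=1..n+2. z i)" by (simp add: prod.distrib)
  finally have cp: "c^((n+1)+1) * (- of_real (S*P)) = 1" using pz by simp
  have u1: "u 1 = - c * of_real S" using uc z1 by simp
  have u1p: "u 1 ^ (n+2) = (-1)^(n+1) * of_real (S^(n+1) / P)"
    using aux3[OF _ _ cp] S0 P0 u1 by simp
  show u10: "u 1 \<noteq> 0" using u1 c0 S0 by simp
  have nn: "cmod ((-1)^(n+1) * (of_real (S^(n+1)/P) :: complex)) = S^(n+1)/P" using S0 P0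
    by (simp only: norm_mult norm_power norm_minus_cancel norm_one power_one norm_of_real) simp
  have "cmod (u 1) ^ (n+2) = S^(n+1) / P" using arg_cong[OF u1p, of cmod] nn
    by (simp only: norm_power)
  then have nu: "cmod (u 1) = AA n tt" unfolding AA_def S_def[symmetric] P_def[symmetric]
    by (intro real_root_pos_unique[symmetric]) auto
  have "ph u ^ (n+2) = u 1 ^ (n+2) / of_real (cmod (u 1) ^ (n+2))" by (simp add: ph_def power_divide)
  also have "\<dots> = (-1)^(n+1)" using u1p \<open>cmod (u 1) ^ (n+2) = S^(n+1) / P\<close> S0 P0 by simp
  finally show "ph u \<in> WW n" by (simp add: WW_def)
  show "u = GG n (ph u) tt"
  proof
    fix i
    have phA: "ph u * of_real (AA n tt) = u 1" using u10 nu f by (simp add: ph_def)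
    show "u i = GG n (ph u) tt i"
    proof (cases "i = 1")
      case True then show ?thesis using phA by (simp add: GG_def)
    next
      case F: False
      show ?thesis
      proof (cases "i \<in> {2..n+2}")
        case True
        have cc: "- (ph u * of_real (AA n tt) / of_real (sS n tt)) = c"
          using phA u1 S0 by (simp add: S_def)
        show ?thesis
        proof (cases "i = n+2")
          case True then show ?thesis using cc un by (simp add: GG_def)
        next
          case False
          then have "i \<in> {2..n+1}" using \<open>i \<in> {2..n+2}\<close> by auto
          then show ?thesis using cc uc tz False F by (auto simp: GG_def)
        qed
      next
        case False
        then have "i \<notin> {1..n+2}" using F by auto
        then have "u i = 0" using uM unfolding Mbar0_def by blast
        then show ?thesis using GG_outside[OF \<open>i \<notin> {1..n+2}\<close>] by simp
      qed
    qed
  qed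
qed
lemma pos_interp:
  assumes "pos n t" "x \<in> {0..1::real}"
  shows "pos n (\<lambda>i. (1-x) + x * t i)"
  unfolding pos_def
proof
  fix i assume i: "i \<in> {2..n+1}"
  then have "t i > 0" using assms(1) unfolding pos_def by blast
  show "(1-x) + x * t i > 0"
  proof (cases "x = 1")
    case True then show ?thesis using \<open>t i > 0\<close> by simp
  next
    case False then have "1 - x > 0" using assms(2) by auto
    moreover have "x * t i \<ge> 0" using assms(2) \<open>t i > 0\<close> by simp
    ultimately show ?thesis by linarith
  qed
qed

lemma cont_GG:
  assumes "pos n t"
  shows "continuous_on {0..1} (\<lambda>x. GG n w (\<lambda>i. (1-x) + x * t i))"
proof (rule continuous_on_coordinatewise_then_product)
  fix i
  have p: "\<forall>x\<in>{0..1}. pos n (\<lambda>i. (1-x) + x * t i)" using pos_interp[OF assms] by blast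
  have cS: "continuous_on {0..1} (\<lambda>x. sS n (\<lambda>i. (1-x) + x * t i))" unfolding sS_def
    by (intro continuous_intros)
  have cP: "continuous_on {0..1} (\<lambda>x. PP n (\<lambda>i. (1-x) + x * t i))" unfolding PP_def
    by (intro continuous_intros)
  have hP: "PP n (\<lambda>i. (1-x) + x * t i) \<noteq> 0" if "x \<in> {0..1}" for x
    using pos_facts(2)[OF p[rule_format, OF that]] by simp
  have hS: "sS n (\<lambda>i. (1-x) + x * t i) \<noteq> 0" if "x \<in> {0..1}" for x
    using pos_facts(1)[OF p[rule_format, OF that]] by simp
  have cA: "continuous_on {0..1} (\<lambda>x. AA n (\<lambda>i. (1-x) + x * t i))" unfolding AA_def
    by (intro continuous_intros cS cP) (use hP in auto)
  show "continuous_on {0..1} (\<lambda>x. GG n w (\<lambda>i. (1-x) + x * t i) i)"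
  proof (cases "i = 1")
    case True then show ?thesis unfolding GG_def using cA by (simp add: continuous_intros)
  next
    case F: False
    show ?thesis
    proof (cases "i \<in> {2..n+2}")
      case True
      have cE: "continuous_on {0..1} (\<lambda>x. if i = n+2 then 1 else (1-x) + x * t i)"
        by (cases "i = n+2") (simp_all add: continuous_intros)
      have "continuous_on {0..1} (\<lambda>x. - (w * of_real (AA n (\<lambda>i. (1-x) + x * t i)) / of_real (sS n (\<lambda>i. (1-x) + x * t i)))
          * of_real (if i = n+2 then 1 else (1-x) + x * t i))"
        by (intro continuous_intros cS cA cE) (use hS in auto)
      then show ?thesis unfolding GG_def using F True by simp
    next
      case False
      then have "(\<lambda>x. GG n w (\<lambda>i. (1-x) + x * t i) i) = (\<lambda>x. 0)" using F by (auto simp: GG_def)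
      then show ?thesis using continuous_on_const[of "{0..1::real}" "0::complex"] by metis
    qed
  qed
qed

lemma pos_one: "pos n (\<lambda>i. 1)" by (simp add: pos_def)

lemma CC_connected:
  assumes w: "w \<in> WW n"
  shows "connected (CC n w)"
proof -
  have w1: "cmod w = 1" using WW_norm[OF w] .
  define b where "b = GG n w (\<lambda>i. 1)"
  define tt where "tt = (\<lambda>u i. Re (u i / u (n+2)))"
  define \<gamma> where "\<gamma> = (\<lambda>u x. GG n w (\<lambda>i. (1-x) + x * tt u i))"
  have sub: "\<gamma> u ` {0..1} \<subseteq> CC n w" if "u \<in> CC n w" for u
  proof
    fix v assume "v \<in> \<gamma> u ` {0..1}"
    then obtain x where x: "x \<in> {0..1}" "v = \<gamma> u x" by blast
    have pu: "pos n (tt u)" using decomp(1)[of u n] that unfolding CC_def tt_def by blast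
    have "pos n (\<lambda>i. (1-x) + x * tt u i)" using pos_interp[OF pu x(1)] .
    then show "v \<in> CC n w" unfolding CC_def x(2) \<gamma>_def using GG_mem[OF _ w] ph_GG w1 by auto
  qed
  have ends: "\<gamma> u 0 = b" "u \<in> CC n w \<Longrightarrow> \<gamma> u 1 = u" for u
  proof -
    show "\<gamma> u 0 = b" by (simp add: \<gamma>_def b_def)
    assume "u \<in> CC n w"
    then have "u = GG n w (tt u)" using decomp(4)[of u n] unfolding CC_def tt_def by auto
    then show "\<gamma> u 1 = u" by (simp add: \<gamma>_def)
  qed
  have conn: "connected (\<gamma> u ` {0..1})" if "u \<in> CC n w" for u
  proof -
    have pu: "pos n (tt u)" using decomp(1)[of u n] that unfolding CC_def tt_def by blast
    show ?thesis unfolding \<gamma>_def by (intro connected_continuous_image cont_GG pu) simp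
  qed
  have eq: "CC n w = \<Union> ((\<lambda>u. \<gamma> u ` {0..1}) ` CC n w)"
  proof
    show "CC n w \<subseteq> \<Union> ((\<lambda>u. \<gamma> u ` {0..1}) ` CC n w)"
    proof
      fix u assume u: "u \<in> CC n w"
      have "u \<in> \<gamma> u ` {0..1}" by (rule image_eqI[of u "\<gamma> u" 1]) (use ends(2)[OF u] in auto)
      then show "u \<in> \<Union> ((\<lambda>u. \<gamma> u ` {0..1}) ` CC n w)" using u by blast
    qed
  qed (use sub in blast)
  have "b \<in> \<Inter> ((\<lambda>u. \<gamma> u ` {0..1}) ` CC n w)"
  proof (rule INT_I)
    fix u assume "u \<in> CC n w"
    show "b \<in> \<gamma> u ` {0..1}" by (rule image_eqI[of b "\<gamma> u" 0]) (use ends(1) in auto)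
  qed
  then have ne: "\<Inter> ((\<lambda>u. \<gamma> u ` {0..1}) ` CC n w) \<noteq> {}" by blast
  have "connected (\<Union> ((\<lambda>u. \<gamma> u ` {0..1}) ` CC n w))"
    by (rule connected_Union[OF _ ne]) (use conn in blast)
  then show ?thesis by (subst eq)
qed

lemma CC_ne:
  assumes w: "w \<in> WW n"
  shows "GG n w (\<lambda>i. 1) \<in> CC n w"
  unfolding CC_def using GG_mem[OF pos_one w] ph_GG[OF pos_one WW_norm[OF w]] by simp

lemma ph_cont: "continuous_on (preU1 n) ph"
proof -
  have c1: "continuous_on (preU1 n) (\<lambda>u. u 1)"
    by (rule continuous_on_subset[OF continuous_on_product_coordinates]) simp
  show ?thesis unfolding ph_def using decomp(2)
    by (intro continuous_intros c1) auto
qed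

lemma WW_card: "card (WW n) = n + 2"
  unfolding WW_def by (rule card_nth_roots) auto

lemma WW_finite: "finite (WW n)"
  using WW_card[of n] by (intro card_ge_0_finite) simp

lemma CC_comp:
  assumes w: "w \<in> WW n"
  shows "CC n w \<in> components (preU1 n)"
  unfolding in_components_maximal
proof (intro conjI allI impI)
  show "CC n w \<noteq> {}" using CC_ne[OF w] by blast
  show "CC n w \<subseteq> preU1 n" unfolding CC_def by blast
  show "connected (CC n w)" using CC_connected[OF w] .
  fix D assume D: "D \<noteq> {} \<and> CC n w \<subseteq> D \<and> D \<subseteq> preU1 n \<and> connected D"
  have Dsub: "D \<subseteq> preU1 n" and Dc: "connected D" and CD: "CC n w \<subseteq> D" using D by simp_all
  have c1: "connected (ph ` D)"
    by (rule connected_continuous_image[OF continuous_on_subset[OF ph_cont Dsub] Dc])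
  have "ph ` D \<subseteq> WW n"
  proof
    fix v assume "v \<in> ph ` D"
    then obtain u where "u \<in> D" "v = ph u" by blast
    then show "v \<in> WW n" using decomp(3)[of u n] Dsub by blast
  qed
  then have "finite (ph ` D)" using WW_finite finite_subset by blast
  then have sg: "ph ` D = {} \<or> (\<exists>a. ph ` D = {a})" using connected_finite_iff_sing[OF c1] by simp
  have wD: "w \<in> ph ` D" using CC_ne[OF w] CD unfolding CC_def by (metis (mono_tags, lifting) CollectD image_eqI subsetD)
  have "ph ` D = {w}"
  proof -
    obtain a where a: "ph ` D = {a}" using sg wD by blast
    have "a = w" using wD unfolding a by simp
    then show ?thesis using a by simp
  qed
  have "D \<subseteq> CC n w"
  proof
    fix u assume u: "u \<in> D"
    then have "ph u = w" using \<open>ph ` D = {w}\<close> by blast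
    then show "u \<in> CC n w" using u Dsub unfolding CC_def by blast
  qed
  then show "D = CC n w" using CD by blast
qed

lemma comps_eq: "components (preU1 n) = CC n ` WW n"
proof
  show "CC n ` WW n \<subseteq> components (preU1 n)" using CC_comp by blast
  show "components (preU1 n) \<subseteq> CC n ` WW n"
  proof
    fix C assume C: "C \<in> components (preU1 n)"
    then obtain u where u: "u \<in> C" using in_components_nonempty by blast
    then have up: "u \<in> preU1 n" using C in_components_subset by blast
    have w: "ph u \<in> WW n" using decomp(3)[OF up] .
    have "u \<in> CC n (ph u)" using up unfolding CC_def by simp
    then have "C = CC n (ph u)" using components_eq[OF C CC_comp[OF w]] u by blast
    then show "C \<in> CC n ` WW n" using w by blast
  qed
qed

lemma CC_inj: "inj_on (CC n) (WW n)"
proof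
  fix v w assume v: "v \<in> WW n" and w: "w \<in> WW n" and eq: "CC n v = CC n w"
  have "GG n v (\<lambda>i. 1) \<in> CC n w" using CC_ne[OF v] eq by simp
  then have "ph (GG n v (\<lambda>i. 1)) = w" unfolding CC_def by simp
  then show "v = w" using ph_GG[OF pos_one WW_norm[OF v]] by simp
qed
lemma AA_one: "AA n (\<lambda>i. 1) = root (n+2) (real (n+1) ^ (n+1))"
proof -
  have "sS n (\<lambda>i. 1) = real (n+1)" by (simp add: sS_def)
  moreover have "PP n (\<lambda>i. 1) = 1" by (simp add: PP_def)
  ultimately show ?thesis by (simp add: AA_def)
qed

lemma Z_norm:
  assumes "\<zeta> ^ (n+2) = (-1) ^ (n+1) * (of_nat (n+1)) ^ (n+1)"
  shows "cmod \<zeta> = root (n+2) (real (n+1) ^ (n+1))"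
proof -
  have "cmod (\<zeta> ^ (n+2)) = cmod ((-1::complex) ^ (n+1) * (of_nat (n+1)) ^ (n+1))" using assms by simp
  then have "cmod \<zeta> ^ (n+2) = real (n+1) ^ (n+1)"
    by (simp only: norm_power norm_mult norm_minus_cancel norm_one power_one norm_of_nat mult_1_left)
  then show ?thesis by (intro real_root_pos_unique[symmetric]) auto
qed

theorem mainTheorem12:
  fixes n :: nat
  assumes "n \<ge> 1"
  defines "Z \<equiv> {\<zeta>::complex. \<zeta> ^ (n+2) = (-1) ^ (n+1) * (of_nat (n+1)) ^ (n+1)}"
  shows "card (components (preU1 n)) = n + 2
    \<and> (\<exists>U. bij_betw U Z (components (preU1 n))
         \<and> (\<forall>\<zeta>\<in>Z. \<forall>C\<in>components (preU1 n). \<zeta> \<in> varpi ` C \<longleftrightarrow> C = U \<zeta>))"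
proof -
  define r where "r = root (n+2) (real (n+1) ^ (n+1))"
  have r0: "r > 0" unfolding r_def by simp
  have rp: "r ^ (n+2) = real (n+1) ^ (n+1)" unfolding r_def by (intro real_root_pow_pos) auto
  define f where "f = (\<lambda>\<zeta>::complex. \<zeta> / of_real (cmod \<zeta>))"
  have nz: "\<zeta> \<in> Z \<Longrightarrow> cmod \<zeta> = r" for \<zeta> unfolding Z_def r_def using Z_norm by blast
  have zf: "\<zeta> \<in> Z \<Longrightarrow> \<zeta> = f \<zeta> * of_real r" for \<zeta> using nz[of \<zeta>] r0 by (simp add: f_def)
  have fW: "f \<zeta> \<in> WW n" if z: "\<zeta> \<in> Z" for \<zeta>
  proof -
    have "f \<zeta> ^ (n+2) = \<zeta> ^ (n+2) / of_real (r ^ (n+2))" using nz[OF z] by (simp add: f_def power_divide)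
    also have "\<dots> = (-1) ^ (n+1) * (of_nat (n+1)) ^ (n+1) / of_real (real (n+1) ^ (n+1))"
      using z rp unfolding Z_def by simp
    also have "\<dots> = (-1) ^ (n+1)"
    proof -
      have "(of_real (real (n+1) ^ (n+1)) :: complex) = (of_nat (n+1)) ^ (n+1)" by simp
      moreover have "(of_nat (n+1) :: complex) ^ (n+1) \<noteq> 0" by (simp only: power_not_zero of_nat_eq_0_iff) simp
      ultimately show ?thesis by simp
    qed
    finally show ?thesis by (simp add: WW_def)
  qed
  have bf: "bij_betw f Z (WW n)"
  proof (rule bij_betw_imageI)
    show "inj_on f Z"
    proof
      fix a b assume "a \<in> Z" "b \<in> Z" "f a = f b"
      then show "a = b" using zf by metis
    qed
    show "f ` Z = WW n"
    proof
      show "f ` Z \<subseteq> WW n" using fW by blast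
      show "WW n \<subseteq> f ` Z"
      proof
        fix w assume w: "w \<in> WW n"
        define \<zeta> where "\<zeta> = of_real r * w"
        have w1: "cmod w = 1" using WW_norm[OF w] .
        have "\<zeta> ^ (n+2) = of_real (r ^ (n+2)) * w ^ (n+2)" by (simp add: \<zeta>_def power_mult_distrib)
        also have "\<dots> = (-1) ^ (n+1) * (of_nat (n+1)) ^ (n+1)" using rp w unfolding WW_def by simp
        finally have "\<zeta> \<in> Z" unfolding Z_def by simp
        moreover have "f \<zeta> = w" using w1 r0 by (simp add: f_def \<zeta>_def norm_mult)
        ultimately show "w \<in> f ` Z" by blast
      qed
    qed
  qed
  have bC: "bij_betw (CC n) (WW n) (components (preU1 n))"
    unfolding comps_eq by (rule bij_betw_imageI[OF CC_inj refl])
  have "card (components (preU1 n)) = n + 2"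
    using bij_betw_same_card[OF bC] WW_card by simp
  moreover have "bij_betw (CC n \<circ> f) Z (components (preU1 n))" by (rule bij_betw_trans[OF bf bC])
  moreover have "\<forall>\<zeta>\<in>Z. \<forall>C\<in>components (preU1 n). \<zeta> \<in> varpi ` C \<longleftrightarrow> C = (CC n \<circ> f) \<zeta>"
  proof (intro ballI)
    fix \<zeta> C assume z: "\<zeta> \<in> Z" and C: "C \<in> components (preU1 n)"
    obtain w' where w': "w' \<in> WW n" "C = CC n w'" using C unfolding comps_eq by blast
    show "\<zeta> \<in> varpi ` C \<longleftrightarrow> C = (CC n \<circ> f) \<zeta>"
    proof
      assume "\<zeta> \<in> varpi ` C"
      then obtain u where u: "u \<in> CC n w'" "\<zeta> = u 1" using w' by (auto simp: varpi_def)
      then have "ph u = w'" unfolding CC_def by simp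
      then have "f \<zeta> = w'" using u(2) by (simp add: ph_def f_def)
      then show "C = (CC n \<circ> f) \<zeta>" using w' by simp
    next
      assume Ceq: "C = (CC n \<circ> f) \<zeta>"
      define u where "u = GG n (f \<zeta>) (\<lambda>i. 1)"
      have "u \<in> C" using CC_ne[OF fW[OF z]] Ceq by (simp add: u_def)
      moreover have "varpi u = \<zeta>"
        using zf[OF z] by (simp add: varpi_def u_def GG_def AA_one r_def)
      ultimately show "\<zeta> \<in> varpi ` C" by (metis image_eqI)
    qed
  qed
  ultimately show ?thesis by blast
qed

end
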